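(* Let $G$ be a connected graph with minimum degree $\delta(G)\ge 2$. If $G$ has an independent $\Gamma$-set, then $\Gamma(G)=\Gamma_{\rm cer}(G)$.
   Context: All graphs are finite and simple; $\delta(G)$ is the minimum degree. A set $D\subseteq V_G$ is a dominating set of $G$ if every vertex of $V_G-D$ has a neighbor in $D$; $\Gamma(G)$ is the maximum cardinality of a minimal (with respect to inclusion) dominating set, and a $\Gamma$-set is a minimal dominating set of cardinality $\Gamma(G)$. A set $D$ is a certified dominating set of $G$ if $D$ is dominating and every vertex of $D$ has either zero or at least two neighbors in $V_G-D$; $\Gamma_{\rm cer}(G)$ is the maximum cardinality of a minimal (with respect to inclusion) certified dominating set. *)

theory Defs
  imports Main
begin

definition simple_graph :: "'a set \<Rightarrow> ('a \<Rightarrow> 'a \<Rightarrow> bool) \<Rightarrow> bool" where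
  "simple_graph V E \<longleftrightarrow> finite V \<and> (\<forall>u v. E u v \<longrightarrow> u \<in> V \<and> v \<in> V)
     \<and> (\<forall>u v. E u v \<longrightarrow> E v u) \<and> (\<forall>v. \<not> E v v)"

definition nbhd :: "'a set \<Rightarrow> ('a \<Rightarrow> 'a \<Rightarrow> bool) \<Rightarrow> 'a \<Rightarrow> 'a set" where
  "nbhd V E v = {u \<in> V. E v u}"

definition degree :: "'a set \<Rightarrow> ('a \<Rightarrow> 'a \<Rightarrow> bool) \<Rightarrow> 'a \<Rightarrow> nat" where
  "degree V E v = card (nbhd V E v)"

definition min_degree :: "'a set \<Rightarrow> ('a \<Rightarrow> 'a \<Rightarrow> bool) \<Rightarrow> nat" where
  "min_degree V E = Min (degree V E ` V)"

definition connected_graph :: "'a set \<Rightarrow> ('a \<Rightarrow> 'a \<Rightarrow> bool) \<Rightarrow> bool" where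
  "connected_graph V E \<longleftrightarrow> V \<noteq> {} \<and> (\<forall>u\<in>V. \<forall>v\<in>V. (\<lambda>x y. E x y)\<^sup>*\<^sup>* u v)"

definition independent_set :: "'a set \<Rightarrow> ('a \<Rightarrow> 'a \<Rightarrow> bool) \<Rightarrow> 'a set \<Rightarrow> bool" where
  "independent_set V E S \<longleftrightarrow> S \<subseteq> V \<and> (\<forall>u\<in>S. \<forall>v\<in>S. \<not> E u v)"

definition dominating_set :: "'a set \<Rightarrow> ('a \<Rightarrow> 'a \<Rightarrow> bool) \<Rightarrow> 'a set \<Rightarrow> bool" where
  "dominating_set V E D \<longleftrightarrow> D \<subseteq> V \<and> (\<forall>v \<in> V - D. \<exists>u\<in>D. E v u)"

definition minimal_dominating_set :: "'a set \<Rightarrow> ('a \<Rightarrow> 'a \<Rightarrow> bool) \<Rightarrow> 'a set \<Rightarrow> bool" where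
  "minimal_dominating_set V E D \<longleftrightarrow> dominating_set V E D \<and>
     (\<forall>D'. D' \<subset> D \<longrightarrow> \<not> dominating_set V E D')"

definition upper_domination :: "'a set \<Rightarrow> ('a \<Rightarrow> 'a \<Rightarrow> bool) \<Rightarrow> nat" where
  "upper_domination V E = Max (card ` {D. minimal_dominating_set V E D})"

definition Gamma_set :: "'a set \<Rightarrow> ('a \<Rightarrow> 'a \<Rightarrow> bool) \<Rightarrow> 'a set \<Rightarrow> bool" where
  "Gamma_set V E D \<longleftrightarrow> minimal_dominating_set V E D \<and> card D = upper_domination V E"

definition certified_dominating_set :: "'a set \<Rightarrow> ('a \<Rightarrow> 'a \<Rightarrow> bool) \<Rightarrow> 'a set \<Rightarrow> bool" where
  "certified_dominating_set V E D \<longleftrightarrow> dominating_set V E D \<and>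
     (\<forall>v\<in>D. card (nbhd V E v - D) = 0 \<or> card (nbhd V E v - D) \<ge> 2)"

definition minimal_certified_dominating_set :: "'a set \<Rightarrow> ('a \<Rightarrow> 'a \<Rightarrow> bool) \<Rightarrow> 'a set \<Rightarrow> bool" where
  "minimal_certified_dominating_set V E D \<longleftrightarrow> certified_dominating_set V E D \<and>
     (\<forall>D'. D' \<subset> D \<longrightarrow> \<not> certified_dominating_set V E D')"

definition upper_certified_domination :: "'a set \<Rightarrow> ('a \<Rightarrow> 'a \<Rightarrow> bool) \<Rightarrow> nat" where
  "upper_certified_domination V E = Max (card ` {D. minimal_certified_dominating_set V E D})"

end

theory Submission
  imports Defs
begin

lemma deg2:
  assumes "simple_graph V E" "min_degree V E \<ge> 2" "v \<in> V"
  shows "card (nbhd V E v) \<ge> 2"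
proof -
  have "finite V" using assms(1) by (simp add: simple_graph_def)
  hence "Min (degree V E ` V) \<le> degree V E v" using assms(3) by simp
  thus ?thesis using assms(2) by (simp add: min_degree_def degree_def)
qed

lemma nb_fin: "simple_graph V E \<Longrightarrow> finite (nbhd V E v)"
  by (simp add: simple_graph_def nbhd_def)

lemma card2_ex: assumes "card A \<ge> 2" shows "\<exists>x. x \<in> A"
  using assms by (metis card.empty ex_in_conv not_numeral_le_zero)

lemma D0_empty:
  assumes G: "simple_graph V E" and md: "min_degree V E \<ge> 2"
    and M: "minimal_certified_dominating_set V E D"
  shows "{v\<in>D. nbhd V E v \<subseteq> D} = {}"
proof (rule ccontr)
  define D0 where "D0 = {v\<in>D. nbhd V E v \<subseteq> D}"
  assume "{v\<in>D. nbhd V E v \<subseteq> D} \<noteq> {}"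
  hence D0ne: "D0 \<noteq> {}" by (simp add: D0_def)
  have fV: "finite V" and sym: "\<And>u v. E u v \<Longrightarrow> E v u" and irr: "\<And>v. \<not> E v v"
    and inV: "\<And>u v. E u v \<Longrightarrow> u \<in> V \<and> v \<in> V"
    using G by (auto simp: simple_graph_def)
  have cert: "certified_dominating_set V E D" and mini: "\<And>D'. D' \<subset> D \<Longrightarrow> \<not> certified_dominating_set V E D'"
    using M by (auto simp: minimal_certified_dominating_set_def)
  have DV: "D \<subseteq> V" and domD: "\<forall>v \<in> V - D. \<exists>u\<in>D. E v u"
    and certD: "\<forall>v\<in>D. card (nbhd V E v - D) = 0 \<or> card (nbhd V E v - D) \<ge> 2"
    using cert by (auto simp: certified_dominating_set_def dominating_set_def)
  have nbE: "\<And>v u. u \<in> nbhd V E v \<longleftrightarrow> u \<in> V \<and> E v u" by (simp add: nbhd_def)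
  define H where "H = {c \<in> D0. card (nbhd V E c \<inter> D0) \<ge> 2}"
  define S where "S = {J. J \<subseteq> H \<and> (\<forall>a\<in>J. \<forall>b\<in>J. \<not> E a b)}"
  have fH: "finite H" using DV fV by (auto simp: H_def D0_def intro: finite_subset)
  have fS: "finite S" unfolding S_def using fH by (simp add: finite_Collect_subsets)
  have "{} \<in> S" by (simp add: S_def)
  hence Sne: "card ` S \<noteq> {}" by auto
  obtain J where JS: "J \<in> S" and Jm: "card J = Max (card ` S)"
    using Max_in[OF finite_imageI[OF fS] Sne] by auto
  have JH: "J \<subseteq> H" and Jind: "\<forall>a\<in>J. \<forall>b\<in>J. \<not> E a b" using JS by (auto simp: S_def)
  have Jmax: "\<exists>j\<in>J. E c j" if c: "c \<in> H - J" for c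
  proof (rule ccontr)
    assume "\<not> (\<exists>j\<in>J. E c j)"
    hence "insert c J \<in> S" using JS c irr sym by (auto simp: S_def)
    hence "card (insert c J) \<le> Max (card ` S)" using fS by simp
    moreover have "finite J" using JH fH finite_subset by blast
    ultimately show False using c Jm by simp
  qed
  define I where "I = D0 - J"
  define D' where "D' = D - I"
  have JD0: "J \<subseteq> D0" using JH by (auto simp: H_def)
  have Ine: "I \<noteq> {}"
  proof -
    obtain c where c: "c \<in> D0" using D0ne by auto
    show ?thesis
    proof (cases "c \<in> J")
      case False thus ?thesis using c by (auto simp: I_def)
    next
      case True
      hence "card (nbhd V E c \<inter> D0) \<ge> 2" using JH by (auto simp: H_def)
      then obtain d where "d \<in> nbhd V E c \<inter> D0" using card2_ex by blast
      hence "d \<in> D0" "E c d" by (auto simp: nbE)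
      hence "d \<in> I" using Jind True by (auto simp: I_def)
      thus ?thesis by auto
    qed
  qed
  have sub: "D' \<subset> D" using Ine by (auto simp: D'_def I_def D0_def)
  have "certified_dominating_set V E D'"
    unfolding certified_dominating_set_def dominating_set_def
  proof (intro conjI ballI)
    show "D' \<subseteq> V" using DV by (auto simp: D'_def)
  next
    fix x assume x: "x \<in> V - D'"
    show "\<exists>u\<in>D'. E x u"
    proof (cases "x \<in> D")
      case False
      then obtain u where u: "u \<in> D" "E x u" using domD x by auto
      have "x \<in> nbhd V E u" using u sym x by (auto simp: nbE)
      hence "u \<notin> D0" using False by (auto simp: D0_def)
      thus ?thesis using u by (auto simp: D'_def I_def)
    next
      case True
      hence xI: "x \<in> I" using x by (auto simp: D'_def)
      hence xD0: "x \<in> D0" by (simp add: I_def)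
      show ?thesis
      proof (cases "card (nbhd V E x \<inter> D0) \<ge> 2")
        case True
        hence "x \<in> H - J" using xI xD0 by (auto simp: H_def I_def)
        then obtain j where "j \<in> J" "E x j" using Jmax by blast
        thus ?thesis using JD0 by (auto simp: D'_def I_def D0_def)
      next
        case False
        have c2: "card (nbhd V E x) \<ge> 2" using deg2[OF G md] x by auto
        have "\<not> nbhd V E x \<subseteq> D0"
        proof
          assume "nbhd V E x \<subseteq> D0"
          hence "nbhd V E x \<inter> D0 = nbhd V E x" by auto
          thus False using False c2 by simp
        qed
        then obtain u where u: "u \<in> nbhd V E x" "u \<notin> D0" by auto
        have "u \<in> D" using u xD0 by (auto simp: D0_def)
        thus ?thesis using u by (auto simp: D'_def I_def nbE)
      qed
    qed
  next
    fix w assume w: "w \<in> D'"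
    have fin: "finite (nbhd V E w - D')" using nb_fin[OF G] by simp
    show "card (nbhd V E w - D') = 0 \<or> 2 \<le> card (nbhd V E w - D')"
    proof (cases "w \<in> D0")
      case True
      hence wJ: "w \<in> J" using w by (auto simp: D'_def I_def)
      hence "w \<in> H" using JH by auto
      hence c2: "card (nbhd V E w \<inter> D0) \<ge> 2" by (simp add: H_def)
      have "nbhd V E w \<inter> D0 \<subseteq> nbhd V E w - D'"
      proof
        fix u assume u: "u \<in> nbhd V E w \<inter> D0"
        hence "u \<notin> J" using wJ Jind by (auto simp: nbE)
        thus "u \<in> nbhd V E w - D'" using u by (auto simp: D'_def I_def)
      qed
      hence "card (nbhd V E w \<inter> D0) \<le> card (nbhd V E w - D')" using fin card_mono by blast
      thus ?thesis using c2 by simp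
    next
      case False
      have wD: "w \<in> D" using w by (simp add: D'_def)
      hence "nbhd V E w - D \<noteq> {}" using False by (auto simp: D0_def)
      hence "card (nbhd V E w - D) \<noteq> 0" using nb_fin[OF G] by simp
      hence c2: "card (nbhd V E w - D) \<ge> 2" using certD wD by auto
      have "nbhd V E w - D \<subseteq> nbhd V E w - D'" by (auto simp: D'_def)
      hence "card (nbhd V E w - D) \<le> card (nbhd V E w - D')" using fin card_mono by blast
      thus ?thesis using c2 by simp
    qed
  qed
  thus False using mini sub by blast
qed

lemma mincert_mindom:
  assumes G: "simple_graph V E" and md: "min_degree V E \<ge> 2"
    and M: "minimal_certified_dominating_set V E D"
  shows "minimal_dominating_set V E D"
proof -
  have D0: "{v\<in>D. nbhd V E v \<subseteq> D} = {}" using D0_empty[OF assms] .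
  have cert: "certified_dominating_set V E D" and mini: "\<And>D'. D' \<subset> D \<Longrightarrow> \<not> certified_dominating_set V E D'"
    using M by (auto simp: minimal_certified_dominating_set_def)
  have DV: "D \<subseteq> V" and dom: "dominating_set V E D"
    and certD: "\<forall>v\<in>D. card (nbhd V E v - D) = 0 \<or> card (nbhd V E v - D) \<ge> 2"
    using cert by (auto simp: certified_dominating_set_def dominating_set_def)
  have "\<not> dominating_set V E D''" if D'': "D'' \<subset> D" for D''
  proof
    assume d: "dominating_set V E D''"
    obtain v where v: "v \<in> D" "v \<notin> D''" using D'' by auto
    define D1 where "D1 = D - {v}"
    have "D1 \<subset> D" using v by (auto simp: D1_def)
    moreover have "certified_dominating_set V E D1"
      unfolding certified_dominating_set_def dominating_set_def
    proof (intro conjI ballI)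
      show "D1 \<subseteq> V" using DV by (auto simp: D1_def)
    next
      fix x assume x: "x \<in> V - D1"
      hence "x \<in> V - D''" using D'' v by (auto simp: D1_def)
      then obtain u where "u \<in> D''" "E x u" using d by (auto simp: dominating_set_def)
      thus "\<exists>u\<in>D1. E x u" using D'' v by (auto simp: D1_def)
    next
      fix w assume w: "w \<in> D1"
      hence wD: "w \<in> D" by (simp add: D1_def)
      hence "nbhd V E w - D \<noteq> {}" using D0 by auto
      hence "card (nbhd V E w - D) \<noteq> 0" using nb_fin[OF G] by simp
      hence c2: "card (nbhd V E w - D) \<ge> 2" using certD wD by auto
      have "nbhd V E w - D \<subseteq> nbhd V E w - D1" by (auto simp: D1_def)
      hence "card (nbhd V E w - D) \<le> card (nbhd V E w - D1)" using nb_fin[OF G] card_mono by blast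
      thus "card (nbhd V E w - D1) = 0 \<or> 2 \<le> card (nbhd V E w - D1)" using c2 by simp
    qed
    ultimately show False using mini by blast
  qed
  thus ?thesis using dom by (simp add: minimal_dominating_set_def)
qed

theorem theorem3p5:
  fixes V :: "'a set" and E :: "'a \<Rightarrow> 'a \<Rightarrow> bool"
  assumes "simple_graph V E"
    and "connected_graph V E"
    and "min_degree V E \<ge> 2"
    and "\<exists>D. Gamma_set V E D \<and> independent_set V E D"
  shows "upper_domination V E = upper_certified_domination V E"
proof -
  have fV: "finite V" using assms(1) by (simp add: simple_graph_def)
  obtain D where GD: "Gamma_set V E D" and ind: "independent_set V E D" using assms(4) by blast
  have mdD: "minimal_dominating_set V E D" and cD: "card D = upper_domination V E"
    using GD by (auto simp: Gamma_set_def)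
  have domD: "dominating_set V E D" using mdD by (simp add: minimal_dominating_set_def)
  have certD: "certified_dominating_set V E D"
    unfolding certified_dominating_set_def
  proof (intro conjI ballI)
    show "dominating_set V E D" by fact
  next
    fix v assume v: "v \<in> D"
    have "nbhd V E v - D = nbhd V E v" using ind v by (auto simp: independent_set_def nbhd_def)
    moreover have "v \<in> V" using v ind by (auto simp: independent_set_def)
    ultimately show "card (nbhd V E v - D) = 0 \<or> 2 \<le> card (nbhd V E v - D)"
      using deg2[OF assms(1) assms(3)] by simp
  qed
  have mcD: "minimal_certified_dominating_set V E D"
    using certD mdD by (auto simp: minimal_certified_dominating_set_def minimal_dominating_set_def certified_dominating_set_def)
  have f1: "finite {D. minimal_dominating_set V E D}"
    by (rule finite_subset[of _ "Pow V"]) (auto simp: minimal_dominating_set_def dominating_set_def fV)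
  have f2: "finite {D. minimal_certified_dominating_set V E D}"
    by (rule finite_subset[of _ "Pow V"]) (auto simp: minimal_certified_dominating_set_def certified_dominating_set_def dominating_set_def fV)
  have le1: "upper_domination V E \<le> upper_certified_domination V E"
    unfolding upper_certified_domination_def using cD mcD f2 by (metis Max_ge finite_imageI image_eqI mem_Collect_eq)
  have ne2: "card ` {D. minimal_certified_dominating_set V E D} \<noteq> {}" using mcD by auto
  obtain D2 where D2: "minimal_certified_dominating_set V E D2"
    and c2: "card D2 = upper_certified_domination V E"
    using Max_in[OF finite_imageI[OF f2] ne2] unfolding upper_certified_domination_def by auto
  have "minimal_dominating_set V E D2" using mincert_mindom[OF assms(1) assms(3) D2] .
  hence "card D2 \<le> upper_domination V E"
    unfolding upper_domination_def using f1 by (simp add: Max_ge)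
  thus ?thesis using le1 c2 by simp
qed

end
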